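(* Let $X$ be a Hausdorff hereditarily disconnected space. If $\mathcal{C}\subset\mathcal{K}(X)$ is a connected set with more than one point and $K\in\mathcal{C}$, then there is a closed subset $F\subset X$ with $K\subsetneq F$ such that the set $\mathcal{D}=\{K\cup\{x\}:x\in F\}$ is a connected subset of $\mathcal{K}(X)$ and $|\mathcal{D}|>1$.
   Context: $\mathcal{K}(X)$ is the set of nonempty compact subsets of $X$ with the Vietoris topology (generated by $U^+=\{A: A\subset U\}$ and $U^-=\{A: A\cap U\neq\emptyset\}$ for $U$ open in $X$). A space is hereditarily disconnected if every nonempty connected subset is a singleton. *)

theory Defs
  imports "HOL-Analysis.Analysis"
begin

definition hyperspace_K :: "'a topology \<Rightarrow> 'a set set" where
  "hyperspace_K X = {A. A \<noteq> {} \<and> compactin X A}"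

definition vietoris :: "'a topology \<Rightarrow> 'a set topology" where
  "vietoris X = topology_generated_by
     ({{A \<in> hyperspace_K X. A \<subseteq> U} | U. openin X U} \<union>
      {{A \<in> hyperspace_K X. A \<inter> U \<noteq> {}} | U. openin X U})"

definition hereditarily_disconnected :: "'a topology \<Rightarrow> bool" where
  "hereditarily_disconnected X \<longleftrightarrow>
     (\<forall>S. connectedin X S \<and> S \<noteq> {} \<longrightarrow> (\<exists>x. S = {x}))"

end

theory Submission
  imports Defs
begin

lemma topspace_vietoris: "topspace (vietoris X) = hyperspace_K X"
proof -
  define S1 where "S1 = {{A \<in> hyperspace_K X. A \<subseteq> U} |U. openin X U}"
  define S2 where "S2 = {{A \<in> hyperspace_K X. A \<inter> U \<noteq> {}} |U. openin X U}"
  have "topspace (vietoris X) = \<Union>(S1 \<union> S2)"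
    unfolding vietoris_def S1_def S2_def by (rule topology_generated_by_topspace)
  also have "\<dots> = hyperspace_K X"
  proof
    show "\<Union>(S1 \<union> S2) \<subseteq> hyperspace_K X"
    proof
      fix A assume "A \<in> \<Union>(S1 \<union> S2)"
      then obtain W where W: "W \<in> S1 \<union> S2" "A \<in> W" by (rule UnionE)
      have "W \<subseteq> hyperspace_K X" using W(1) unfolding S1_def S2_def by auto
      then show "A \<in> hyperspace_K X" using W(2) by (rule subsetD)
    qed
    show "hyperspace_K X \<subseteq> \<Union>(S1 \<union> S2)"
    proof
      fix A assume A: "A \<in> hyperspace_K X"
      have "A \<subseteq> topspace X" using A by (simp add: hyperspace_K_def compactin_subset_topspace)
      then have "A \<in> {A \<in> hyperspace_K X. A \<subseteq> topspace X}" using A by simp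
      moreover have "{A \<in> hyperspace_K X. A \<subseteq> topspace X} \<in> S1"
        unfolding S1_def by (rule CollectI, rule exI[of _ "topspace X"], simp)
      ultimately show "A \<in> \<Union>(S1 \<union> S2)" by (rule UnionI[OF UnI1, rotated])
    qed
  qed
  finally show ?thesis .
qed

lemma viet_plus: "openin X U \<Longrightarrow> openin (vietoris X) {A \<in> hyperspace_K X. A \<subseteq> U}"
  unfolding vietoris_def
  by (rule topology_generated_by_Basis, rule UnI1, rule CollectI, rule exI[of _ U], simp)

lemma viet_minus: "openin X U \<Longrightarrow> openin (vietoris X) {A \<in> hyperspace_K X. A \<inter> U \<noteq> {}}"
  unfolding vietoris_def
  by (rule topology_generated_by_Basis, rule UnI2, rule CollectI, rule exI[of _ U], simp)

lemma add_in_K: "K \<in> hyperspace_K X \<Longrightarrow> x \<in> topspace X \<Longrightarrow> K \<union> {x} \<in> hyperspace_K X"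
proof -
  assume "K \<in> hyperspace_K X" "x \<in> topspace X"
  then have "compactin X K" "compactin X {x}" by (auto simp: hyperspace_K_def)
  then have "compactin X (K \<union> {x})" by (rule compactin_Un)
  then show ?thesis by (simp add: hyperspace_K_def)
qed

lemma cont_add:
  assumes "K \<in> hyperspace_K X"
  shows "continuous_map X (vietoris X) (\<lambda>x. K \<union> {x})"
  unfolding vietoris_def
proof (rule continuous_on_generated_topo)
  show "(\<lambda>x. K \<union> {x}) ` topspace X \<subseteq> \<Union>
      ({{A \<in> hyperspace_K X. A \<subseteq> U} |U. openin X U} \<union>
       {{A \<in> hyperspace_K X. A \<inter> U \<noteq> {}} |U. openin X U})"
    using add_in_K[OF assms] by blast
next
  fix W assume "W \<in> {{A \<in> hyperspace_K X. A \<subseteq> U} |U. openin X U} \<union>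
       {{A \<in> hyperspace_K X. A \<inter> U \<noteq> {}} |U. openin X U}"
  then consider U where "openin X U" "W = {A \<in> hyperspace_K X. A \<subseteq> U}"
    | U where "openin X U" "W = {A \<in> hyperspace_K X. A \<inter> U \<noteq> {}}" by blast
  then show "openin X ((\<lambda>x. K \<union> {x}) -` W \<inter> topspace X)"
  proof cases
    case 1
    have "(\<lambda>x. K \<union> {x}) -` W \<inter> topspace X = (if K \<subseteq> U then U else {})"
      using 1 add_in_K[OF assms] openin_subset[OF 1(1)] by auto
    then show ?thesis using 1 by simp
  next
    case 2
    have "(\<lambda>x. K \<union> {x}) -` W \<inter> topspace X = (if K \<inter> U \<noteq> {} then topspace X else U)"
      using 2 add_in_K[OF assms] openin_subset[OF 2(1)] by auto
    then show ?thesis using 2 by simp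
  qed
qed

lemma sep:
  assumes "connectedin (vietoris X) C" "C \<subseteq> hyperspace_K X" "openin X U" "openin X V"
    "\<forall>A\<in>C. A \<subseteq> F" "F \<subseteq> U \<union> V" "F \<inter> U \<inter> V = {}" "B0 \<in> C" "B0 \<subseteq> V"
  shows "\<forall>A\<in>C. A \<subseteq> V"
proof -
  let ?E1 = "{A \<in> hyperspace_K X. A \<subseteq> V}"
  let ?E2 = "{A \<in> hyperspace_K X. A \<inter> U \<noteq> {}}"
  have o1: "openin (vietoris X) ?E1" using viet_plus assms by blast
  have o2: "openin (vietoris X) ?E2" using viet_minus assms by blast
  have c: "C \<subseteq> ?E1 \<union> ?E2" using assms by blast
  have d: "?E1 \<inter> ?E2 \<inter> C = {}" using assms by blast
  have n: "?E1 \<inter> C \<noteq> {}" using assms by blast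
  have H: "\<nexists>E1 E2. openin (vietoris X) E1 \<and> openin (vietoris X) E2 \<and>
             C \<subseteq> E1 \<union> E2 \<and> E1 \<inter> E2 \<inter> C = {} \<and> E1 \<inter> C \<noteq> {} \<and> E2 \<inter> C \<noteq> {}"
    using assms(1) unfolding connectedin by (rule conjunct2)
  have E2: "?E2 \<inter> C = {}"
  proof (rule ccontr)
    assume m: "?E2 \<inter> C \<noteq> {}"
    have "\<exists>E1 E2. openin (vietoris X) E1 \<and> openin (vietoris X) E2 \<and>
             C \<subseteq> E1 \<union> E2 \<and> E1 \<inter> E2 \<inter> C = {} \<and> E1 \<inter> C \<noteq> {} \<and> E2 \<inter> C \<noteq> {}"
      apply (rule exI[of _ ?E1], rule exI[of _ ?E2])
      using o1 o2 c d n m by (intro conjI)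
    then show False using H by (rule notE[rotated])
  qed
  show ?thesis
  proof
    fix A assume A: "A \<in> C"
    then have "A \<notin> ?E2" using E2 by blast
    moreover have "A \<in> ?E1 \<union> ?E2" using subsetD[OF c A] .
    ultimately have "A \<in> ?E1" by blast
    then show "A \<subseteq> V" by simp
  qed
qed

lemma hd_sep:
  assumes "Hausdorff_space X" "hereditarily_disconnected X" "compactin X K" "x \<in> K"
    "compactin X B" "B \<subseteq> K" "x \<notin> B"
  shows "\<exists>U V. openin X U \<and> openin X V \<and> x \<in> U \<and> B \<subseteq> V \<and> K \<subseteq> U \<union> V \<and> K \<inter> U \<inter> V = {}"
proof -
  define Y where "Y = subtopology X K"
  have Ksub: "K \<subseteq> topspace X" using assms compactin_subset_topspace by blast
  have tY: "topspace Y = K" using Ksub by (auto simp: Y_def)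
  have cY: "compact_space Y" using assms(3) by (simp add: Y_def compact_space_subtopology)
  have lY: "locally_compact_space Y" using cY by (simp add: compact_imp_locally_compact_space)
  have hY: "Hausdorff_space Y" using assms(1) by (simp add: Y_def Hausdorff_space_subtopology)
  have xY: "x \<in> topspace Y" using tY assms by simp
  have cc: "connectedin Y (connected_component_of_set Y x)"
    by (simp add: connectedin_connected_component_of)
  hence "connectedin X (connected_component_of_set Y x)"
    unfolding Y_def using connectedin_subtopology by blast
  moreover have "x \<in> connected_component_of_set Y x"
    using xY by (simp add: connected_component_of_refl)
  ultimately obtain y where "connected_component_of_set Y x = {y}"
    using assms(2) unfolding hereditarily_disconnected_def by blast
  hence eq: "connected_component_of_set Y x = {x}"
    using \<open>x \<in> connected_component_of_set Y x\<close> by (metis singletonD)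
  have comp: "{x} \<in> connected_components_of Y"
    using connected_component_in_connected_components_of[of Y x] xY eq by simp
  have "compactin Y B" using assms by (simp add: Y_def compactin_subtopology)
  hence clB: "closedin Y B" using hY by (simp add: compactin_imp_closedin)
  have "compactin Y {x}" using xY by simp
  hence "separated_between Y {x} B"
    using separated_between_compact_connected_component[OF lY hY comp _ clB] assms(7)
    by (simp add: disjnt_def)
  then obtain U' V' where U'V': "openin Y U'" "openin Y V'" "U' \<union> V' = K" "disjnt U' V'"
    "x \<in> U'" "B \<subseteq> V'"
    unfolding separated_between_def tY by blast
  obtain U where U: "openin X U" "U' = U \<inter> K" using U'V'(1) unfolding Y_def openin_subtopology by blast
  obtain V where V: "openin X V" "V' = V \<inter> K" using U'V'(2) unfolding Y_def openin_subtopology by blast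
  show ?thesis
    apply (rule exI[of _ U], rule exI[of _ V])
    using U V U'V' by (auto simp: disjnt_def)
qed

theorem proposition5p7:
  fixes X :: "'a topology" and \<C> :: "'a set set" and K :: "'a set"
  assumes "Hausdorff_space X"
    and "hereditarily_disconnected X"
    and "\<C> \<subseteq> hyperspace_K X"
    and "connectedin (vietoris X) \<C>"
    and "\<exists>A\<in>\<C>. \<exists>B\<in>\<C>. A \<noteq> B"
    and "K \<in> \<C>"
  shows "\<exists>F. closedin X F \<and> K \<subset> F \<and>
           connectedin (vietoris X) ((\<lambda>x. K \<union> {x}) ` F) \<and>
           (\<exists>A\<in>(\<lambda>x. K \<union> {x}) ` F. \<exists>B\<in>(\<lambda>x. K \<union> {x}) ` F. A \<noteq> B)"
proof (cases "\<forall>A\<in>\<C>. A \<subseteq> K")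
  case True
  have KK: "K \<in> hyperspace_K X" using subsetD[OF assms(3) assms(6)] .
  have key: False if AB: "A \<in> \<C>" "B \<in> \<C>" "x \<in> A" "x \<notin> B" for A B x
  proof -
    have cK: "compactin X K" using KK by (simp add: hyperspace_K_def)
    have "B \<in> hyperspace_K X" using subsetD[OF assms(3) AB(2)] .
    then have cB: "compactin X B" by (simp add: hyperspace_K_def)
    have xK: "x \<in> K" using True AB(1,3) by blast
    have BK: "B \<subseteq> K" using True AB(2) by blast
    have "\<exists>U V. openin X U \<and> openin X V \<and> x \<in> U \<and> B \<subseteq> V \<and> K \<subseteq> U \<union> V \<and> K \<inter> U \<inter> V = {}"
      using hd_sep[OF assms(1,2) cK xK cB BK AB(4)] .
    then obtain U V where UV: "openin X U" "openin X V" "x \<in> U" "B \<subseteq> V"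
      "K \<subseteq> U \<union> V" "K \<inter> U \<inter> V = {}"
      by blast
    have "\<forall>A\<in>\<C>. A \<subseteq> V"
      by (rule sep[OF assms(4,3) UV(1,2) True UV(5,6) AB(2) UV(4)])
    then have "x \<in> V" using AB(1,3) by blast
    then have "x \<in> K \<inter> U \<inter> V" using UV(3) xK by blast
    then show False using UV(6) by simp
  qed
  obtain A B where AB: "A \<in> \<C>" "B \<in> \<C>" "A \<noteq> B" using assms(5) by blast
  then consider "\<not> A \<subseteq> B" | "\<not> B \<subseteq> A" by (meson subset_antisym)
  then show ?thesis
  proof cases
    case 1
    then obtain x where "x \<in> A" "x \<notin> B" by (meson subsetI)
    then have False using key[OF AB(1,2)] by blast
    then show ?thesis by (rule FalseE)
  next
    case 2
    then obtain x where "x \<in> B" "x \<notin> A" by (meson subsetI)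
    then have False using key[OF AB(2,1)] by blast
    then show ?thesis by (rule FalseE)
  qed
next
  case False
  then obtain A0 where A0: "A0 \<in> \<C>" "\<not> A0 \<subseteq> K" by blast
  define f where "f = (\<lambda>x. K \<union> {x})"
  define F where "F = X closure_of (\<Union>\<C>)"
  have KK: "K \<in> hyperspace_K X" using subsetD[OF assms(3) assms(6)] .
  have UCsub: "\<Union>\<C> \<subseteq> topspace X"
  proof
    fix y assume "y \<in> \<Union>\<C>"
    then obtain A where "A \<in> \<C>" "y \<in> A" by blast
    then have "A \<in> hyperspace_K X" using assms(3) by blast
    then have "A \<subseteq> topspace X" by (simp add: hyperspace_K_def compactin_subset_topspace)
    then show "y \<in> topspace X" using \<open>y \<in> A\<close> by blast
  qed
  have clF: "closedin X F" by (simp add: F_def)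
  have UCF: "\<Union>\<C> \<subseteq> F" using UCsub by (simp add: F_def closure_of_subset)
  have KsubF: "K \<subseteq> F" using UCF assms(6) by blast
  have A0F: "A0 \<subseteq> F" using UCF A0(1) by blast
  have "K \<noteq> F" using A0F A0(2) by metis
  then have KF: "K \<subset> F" using KsubF by (simp add: psubset_eq)
  have Fsub: "F \<subseteq> topspace X" using clF closedin_subset by blast
  have cont: "continuous_map (subtopology X F) (vietoris X) f"
    unfolding f_def using continuous_map_from_subtopology[OF cont_add[OF KK]] .
  have tF: "topspace (subtopology X F) = F" using Fsub by auto
  obtain k where k: "k \<in> K" using KK by (auto simp: hyperspace_K_def)
  have fk: "f k = K" using k by (auto simp: f_def)
  have "k \<in> F" using k KsubF by blast
  then have KfF: "K \<in> f ` F" using fk by (metis imageI)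
  have claim: False if E: "openin (vietoris X) E1" "openin (vietoris X) E2"
      "f ` F \<subseteq> E1 \<union> E2" "E1 \<inter> E2 \<inter> f ` F = {}" "E2 \<inter> f ` F \<noteq> {}" "K \<in> E1" for E1 E2
  proof -
    have "openin (subtopology X F) {x \<in> topspace (subtopology X F). f x \<in> E1}"
      using cont E(1) unfolding continuous_map_def by blast
    then have "openin (subtopology X F) (f -` E1 \<inter> F)"
      unfolding tF by (simp add: vimage_def Int_def conj_commute)
    then obtain U1 where U1: "openin X U1" "f -` E1 \<inter> F = U1 \<inter> F"
      unfolding openin_subtopology by blast
    have "openin (subtopology X F) {x \<in> topspace (subtopology X F). f x \<in> E2}"
      using cont E(2) unfolding continuous_map_def by blast
    then have o2: "openin (subtopology X F) (f -` E2 \<inter> F)"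
      unfolding tF by (simp add: vimage_def Int_def conj_commute)
    then obtain U2 where U2: "openin X U2" "f -` E2 \<inter> F = U2 \<inter> F"
      unfolding openin_subtopology by blast
    have KU1: "K \<subseteq> U1"
    proof
      fix y assume "y \<in> K"
      then have "f y = K" by (auto simp: f_def)
      then have "y \<in> f -` E1 \<inter> F" using E(6) \<open>y \<in> K\<close> KF by auto
      then show "y \<in> U1" using U1(2) by auto
    qed
    have cov: "F \<subseteq> U1 \<union> U2"
    proof
      fix y assume "y \<in> F"
      then have "f y \<in> E1 \<union> E2" using E(3) by auto
      then show "y \<in> U1 \<union> U2" using U1(2) U2(2) \<open>y \<in> F\<close> by auto
    qed
    have dis: "F \<inter> U2 \<inter> U1 = {}"
    proof (rule ccontr)
      assume "F \<inter> U2 \<inter> U1 \<noteq> {}"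
      then obtain y where "y \<in> F" "y \<in> U1" "y \<in> U2" by auto
      then have "f y \<in> E1" "f y \<in> E2" using U1(2) U2(2) by auto
      then show False using E(4) \<open>y \<in> F\<close> by auto
    qed
    have all: "\<forall>A\<in>\<C>. A \<subseteq> U1"
      by (rule sep[OF assms(4,3) U2(1) U1(1) _ _ dis assms(6) KU1])
        (use UCF cov in auto)
    have "closedin (subtopology X F) (F - (f -` E2 \<inter> F))"
      using closedin_diff[OF closedin_topspace o2] unfolding tF .
    moreover have "F - (f -` E2 \<inter> F) = U1 \<inter> F" using U2(2) cov dis by auto
    ultimately have clU: "closedin X (U1 \<inter> F)"
      using closedin_trans_full[OF _ clF] by simp
    have subU: "\<Union>\<C> \<subseteq> U1 \<inter> F" using all UCF by blast
    have "F \<subseteq> U1 \<inter> F" using closure_of_minimal[OF subU clU] unfolding F_def .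
    then have "U2 \<inter> F = {}" using dis by auto
    then have "f -` E2 \<inter> F = {}" using U2(2) by simp
    then show False using E(5) by auto
  qed
  have conn: "connectedin (vietoris X) (f ` F)"
    unfolding connectedin
  proof (intro conjI notI)
    show "f ` F \<subseteq> topspace (vietoris X)"
      using continuous_map_image_subset_topspace[OF cont] tF by simp
  next
    assume "\<exists>E1 E2. openin (vietoris X) E1 \<and> openin (vietoris X) E2 \<and> f ` F \<subseteq> E1 \<union> E2 \<and>
      E1 \<inter> E2 \<inter> f ` F = {} \<and> E1 \<inter> f ` F \<noteq> {} \<and> E2 \<inter> f ` F \<noteq> {}"
    then obtain E1 E2 where E: "openin (vietoris X) E1" "openin (vietoris X) E2" "f ` F \<subseteq> E1 \<union> E2"
      "E1 \<inter> E2 \<inter> f ` F = {}" "E1 \<inter> f ` F \<noteq> {}" "E2 \<inter> f ` F \<noteq> {}" by blast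
      have "K \<in> E1 \<or> K \<in> E2" using KfF E(3) by blast
    then show False
    proof
      assume "K \<in> E1" then show False using claim[OF E(1-4,6)] by blast
    next
      assume "K \<in> E2"
      moreover have "f ` F \<subseteq> E2 \<union> E1" using E(3) by (simp add: Un_commute)
      moreover have "E2 \<inter> E1 \<inter> f ` F = {}" using E(4) by (simp add: Int_commute)
      ultimately show False using claim[OF E(2,1) _ _ E(5)] by blast
    qed
  qed
  obtain a where a: "a \<in> A0" "a \<notin> K" using A0 by blast
  have "a \<in> F" using a A0 UCF by blast
  have "f a \<noteq> K" using a by (auto simp: f_def)
  moreover have "f a \<in> f ` F" using \<open>a \<in> F\<close> by (rule imageI)
  moreover have "K \<in> f ` F" using KfF .
  ultimately have ex: "\<exists>A\<in>f ` F. \<exists>B\<in>f ` F. A \<noteq> B" by blast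
  have "closedin X F \<and> K \<subset> F \<and> connectedin (vietoris X) (f ` F) \<and> (\<exists>A\<in>f ` F. \<exists>B\<in>f ` F. A \<noteq> B)"
    using clF KF conn ex by (intro conjI)
  then show ?thesis unfolding f_def by (rule exI)
qed

end
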